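(* Let $W=W(v_0;v_1,\dots,v_k)\subseteq K_n$ be a $k$-wheel with vertex set $V=V(W)\subseteq[1,n]$, and let $LT(W)$ be its leading tree. Then: (i) if $v_0=\min V$, then $\operatorname{val}_{LT(W)}(v_0)=k-1$; (ii) if $v_0=\max V$, then $\operatorname{val}_{LT(W)}(v_0)=1$; (iii) if $v_0\notin\{\min V,\max V\}$, then for all $i\in[1,k]$, $\operatorname{val}_{LT(W)}(v_i)=1$ if $v_i>v_0$ and $\operatorname{val}_{LT(W)}(v_i)=2$ if $v_i<v_0$. In this case, if $v_0$ is the $r$-th largest element of $V$ (so $r\in[2,k]$), then $\operatorname{val}_{LT(W)}(v_0)=r-1$.
   Context: For $k\ge 3$ and distinct vertices $v_0,\dots,v_k\in[1,n]$, the $k$-wheel $W(v_0;v_1,\dots,v_k)$ has radii $v_0v_i$ and chords $v_iv_{i+1}$ ($1\le i\le k$, $v_{k+1}=v_1$). A coupled tree of $W$ is a spanning tree $T\subseteq E(W)$ of $V(W)$ whose complement $E(W)\setminus T$ is also a spanning tree. Order the edges of $K_n$ totally by $12\succ13\succ\dots\succ1n\succ23\succ24\succ\dots\succ n{-}1\,n$ (for $a<b$, $c<d$: $ab\succ cd$ iff $a<c$, or $a=c$ and $b<d$). Extend to edge sets: $E\succ F$ iff $|E|>|F|$, or $|E|=|F|$ and the $\succ$-largest element of the symmetric difference $E\triangle F$ lies in $E$ (this is graded lexicographic order on the monomials $m_E$ with $m_{12}>m_{13}>\dots$). The leading tree $LT(W)$ is the $\succ$-largest coupled tree of $W$ (equivalently,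 the tree whose monomial is the leading term of the wheel's tree polynomial). $\operatorname{val}_T(v)$ is the number of edges of $T$ at $v$. *)

theory Defs
  imports Main
begin

text \<open>Edges of K_n are two-element sets of vertices (natural numbers).\<close>

definition wheel_vertices :: "nat \<Rightarrow> nat list \<Rightarrow> nat set" where
  "wheel_vertices v0 vs = set (v0 # vs)"

text \<open>Wheel W(v0; v1..vk) with vs = [v1,...,vk]: radii v0 vi and chords vi v(i+1), v(k+1) = v1.\<close>
definition wheel_edges :: "nat \<Rightarrow> nat list \<Rightarrow> nat set set" where
  "wheel_edges v0 vs =
     {{v0, vs ! i} | i. i < length vs} \<union>
     {{vs ! i, vs ! ((i + 1) mod length vs)} | i. i < length vs}"

definition is_wheel :: "nat \<Rightarrow> nat \<Rightarrow> nat list \<Rightarrow> bool" where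
  "is_wheel n v0 vs \<longleftrightarrow> length vs \<ge> 3 \<and> distinct (v0 # vs) \<and> set (v0 # vs) \<subseteq> {1..n}"

definition edge_rel :: "nat set set \<Rightarrow> (nat \<times> nat) set" where
  "edge_rel T = {(a, b). {a, b} \<in> T}"

text \<open>A spanning tree of V: edges inside V, connected on V, and acyclic (every edge is a bridge).\<close>
definition spanning_tree :: "nat set \<Rightarrow> nat set set \<Rightarrow> bool" where
  "spanning_tree V T \<longleftrightarrow>
     (\<forall>e\<in>T. e \<subseteq> V \<and> card e = 2) \<and>
     (\<forall>u\<in>V. \<forall>w\<in>V. (u, w) \<in> (edge_rel T)\<^sup>*) \<and>
     (\<forall>e\<in>T. \<forall>a b. e = {a, b} \<longrightarrow> (a, b) \<notin> (edge_rel (T - {e}))\<^sup>*)"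

definition coupled_tree :: "nat \<Rightarrow> nat list \<Rightarrow> nat set set \<Rightarrow> bool" where
  "coupled_tree v0 vs T \<longleftrightarrow>
     T \<subseteq> wheel_edges v0 vs \<and>
     spanning_tree (wheel_vertices v0 vs) T \<and>
     spanning_tree (wheel_vertices v0 vs) (wheel_edges v0 vs - T)"

definition edge_gt :: "nat set \<Rightarrow> nat set \<Rightarrow> bool" where
  "edge_gt e f \<longleftrightarrow> Min e < Min f \<or> (Min e = Min f \<and> Max e < Max f)"

definition set_gt :: "nat set set \<Rightarrow> nat set set \<Rightarrow> bool" where
  "set_gt E F \<longleftrightarrow> card E > card F \<or>
     (card E = card F \<and>
      (\<exists>x \<in> E - F. \<forall>y \<in> (E - F) \<union> (F - E). y \<noteq> x \<longrightarrow> edge_gt x y))"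

definition leading_tree :: "nat \<Rightarrow> nat list \<Rightarrow> nat set set" where
  "leading_tree v0 vs = (THE T. coupled_tree v0 vs T \<and>
      (\<forall>T'. coupled_tree v0 vs T' \<and> T' \<noteq> T \<longrightarrow> set_gt T T'))"

definition val :: "nat set set \<Rightarrow> nat \<Rightarrow> nat" where
  "val T v = card {e \<in> T. v \<in> e}"

end

theory Submission
  imports Defs
begin

lemma card2_eq: "card (e::nat set) = 2 \<Longrightarrow> e = {Min e, Max e}"
  by (auto simp: card_2_iff)

lemma edge_gt_trans: "edge_gt a b \<Longrightarrow> edge_gt b c \<Longrightarrow> edge_gt a c"
  unfolding edge_gt_def by auto

lemma edge_gt_asym: "edge_gt a b \<Longrightarrow> \<not> edge_gt b a"
  unfolding edge_gt_def by auto

lemma edge_gt_total: "card a = 2 \<Longrightarrow> card b = 2 \<Longrightarrow> a \<noteq> b \<Longrightarrow> edge_gt a b \<or> edge_gt b a"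
  unfolding edge_gt_def
  by (metis card2_eq linorder_neqE_nat)

lemma edge_max:
  assumes "finite X" "X \<noteq> {}" "\<forall>e\<in>X. card e = 2"
  shows "\<exists>m\<in>X. \<forall>y\<in>X. y \<noteq> m \<longrightarrow> edge_gt m y"
  using assms
proof (induction X rule: finite_ne_induct)
  case (singleton x) then show ?case by auto
next
  case (insert x F)
  then obtain m where m: "m \<in> F" "\<forall>y\<in>F. y \<noteq> m \<longrightarrow> edge_gt m y" by auto
  show ?case
  proof (cases "edge_gt x m")
    case True
    then show ?thesis using m by (metis edge_gt_trans insert_iff)
  next
    case False
    then have "edge_gt m x" using edge_gt_total[of x m] insert m by auto
    then show ?thesis using m by auto
  qed
qed

lemma set_gt_asym: "set_gt E F \<Longrightarrow> \<not> set_gt F E"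
  unfolding set_gt_def
  by (metis DiffD1 DiffD2 Un_iff edge_gt_asym less_not_sym)

lemma set_gt_irrefl: "\<not> set_gt E E"
  using set_gt_asym by blast

lemma set_gt_trans:
  assumes "set_gt E F" "set_gt F G" "\<forall>e\<in>E \<union> F \<union> G. card e = 2"
  shows "set_gt E G"
proof (cases "card E = card F \<and> card F = card G")
  case False
  then show ?thesis using assms unfolding set_gt_def by auto
next
  case True
  from assms(1) True obtain x where x: "x \<in> E - F" "\<forall>y \<in> (E - F) \<union> (F - E). y \<noteq> x \<longrightarrow> edge_gt x y"
    unfolding set_gt_def by auto
  from assms(2) True obtain y where y: "y \<in> F - G" "\<forall>z \<in> (F - G) \<union> (G - F). z \<noteq> y \<longrightarrow> edge_gt y z"
    unfolding set_gt_def by auto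
  have "x \<noteq> y" using x y by auto
  then have "edge_gt x y \<or> edge_gt y x" using edge_gt_total assms(3) x y by auto
  then show ?thesis
  proof
    assume xy: "edge_gt x y"
    have "x \<notin> G"
    proof
      assume "x \<in> G"
      then have "edge_gt y x" using x y \<open>x \<noteq> y\<close> by auto
      then show False using xy edge_gt_asym by auto
    qed
    moreover have "\<forall>z \<in> (E - G) \<union> (G - E). z \<noteq> x \<longrightarrow> edge_gt x z"
    proof (intro ballI impI)
      fix z assume z: "z \<in> (E - G) \<union> (G - E)" "z \<noteq> x"
      show "edge_gt x z"
      proof (cases "z \<in> (E - F) \<union> (F - E)")
        case True then show ?thesis using x z by auto
      next
        case False
        then have "z \<in> (F - G) \<union> (G - F)" using z by auto
        then show ?thesis using y xy edge_gt_trans by (cases "z = y") auto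
      qed
    qed
    ultimately show ?thesis using True x unfolding set_gt_def by auto
  next
    assume yx: "edge_gt y x"
    have "y \<in> E"
    proof (rule ccontr)
      assume "y \<notin> E"
      then have "edge_gt x y" using x y \<open>x \<noteq> y\<close> by auto
      then show False using yx edge_gt_asym by auto
    qed
    moreover have "\<forall>z \<in> (E - G) \<union> (G - E). z \<noteq> y \<longrightarrow> edge_gt y z"
    proof (intro ballI impI)
      fix z assume z: "z \<in> (E - G) \<union> (G - E)" "z \<noteq> y"
      show "edge_gt y z"
      proof (cases "z \<in> (F - G) \<union> (G - F)")
        case True then show ?thesis using y z by auto
      next
        case False
        then have "z \<in> (E - F) \<union> (F - E)" using z by auto
        then show ?thesis using x yx edge_gt_trans by (cases "z = x") auto
      qed
    qed
    ultimately show ?thesis using True y unfolding set_gt_def by auto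
  qed
qed

lemma set_gt_total:
  assumes "finite E" "finite F" "E \<noteq> F" "\<forall>e\<in>E \<union> F. card e = 2"
  shows "set_gt E F \<or> set_gt F E"
proof (cases "card E = card F")
  case False then show ?thesis unfolding set_gt_def by auto
next
  case True
  let ?S = "(E - F) \<union> (F - E)"
  have "finite ?S" "?S \<noteq> {}" "\<forall>e\<in>?S. card e = 2" using assms by auto
  then obtain m where m: "m \<in> ?S" "\<forall>y\<in>?S. y \<noteq> m \<longrightarrow> edge_gt m y" using edge_max by blast
  show ?thesis
  proof (cases "m \<in> E - F")
    case True then show ?thesis using m \<open>card E = card F\<close> unfolding set_gt_def by auto
  next
    case False then have "m \<in> F - E" using m by auto
    then show ?thesis using m \<open>card E = card F\<close> unfolding set_gt_def by (auto simp: Un_commute)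
  qed
qed

lemma set_gt_max:
  assumes "finite \<T>" "\<T> \<noteq> {}" "\<forall>T\<in>\<T>. finite T \<and> (\<forall>e\<in>T. card e = 2)"
  shows "\<exists>M\<in>\<T>. \<forall>T\<in>\<T>. T \<noteq> M \<longrightarrow> set_gt M T"
  using assms
proof (induction \<T> rule: finite_ne_induct)
  case (singleton x) then show ?case by auto
next
  case (insert x F)
  then obtain m where m: "m \<in> F" "\<forall>y\<in>F. y \<noteq> m \<longrightarrow> set_gt m y" by auto
  have xm: "x \<noteq> m" using insert m by auto
  show ?case
  proof (cases "set_gt x m")
    case True
    have "\<forall>y\<in>F. y \<noteq> x \<longrightarrow> set_gt x y"
    proof (intro ballI impI)
      fix y assume "y \<in> F" "y \<noteq> x"
      show "set_gt x y"
      proof (cases "y = m")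
        case True then show ?thesis using \<open>set_gt x m\<close> by simp
      next
        case False
        then have "set_gt m y" using m \<open>y \<in> F\<close> by auto
        moreover have "\<forall>e\<in>x \<union> m \<union> y. card e = 2" using insert.prems \<open>y \<in> F\<close> m(1) by auto
        ultimately show ?thesis using set_gt_trans[OF \<open>set_gt x m\<close>] by blast
      qed
    qed
    then show ?thesis by auto
  next
    case False
    have "finite x" "finite m" "\<forall>e\<in>x \<union> m. card e = 2" using insert.prems m(1) by auto
    then have "set_gt m x" using set_gt_total[of x m] False xm by auto
    then show ?thesis using m by auto
  qed
qed


lemma edge_rel_sym: "(a, b) \<in> edge_rel T \<Longrightarrow> (b, a) \<in> edge_rel T"
  unfolding edge_rel_def by (auto simp: insert_commute)

lemma edge_rel_rtrancl_sym: "(a, b) \<in> (edge_rel T)\<^sup>* \<Longrightarrow> (b, a) \<in> (edge_rel T)\<^sup>*"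
proof (induction rule: rtrancl_induct)
  case base then show ?case by simp
next
  case (step y z)
  then show ?case using edge_rel_sym converse_rtrancl_into_rtrancl by metis
qed

lemma closed_rtrancl:
  assumes "(a, b) \<in> R\<^sup>*" "a \<in> S" "\<And>p q. (p, q) \<in> R \<Longrightarrow> p \<in> S \<Longrightarrow> q \<in> S"
  shows "b \<in> S"
  using assms(1,2) by (induction rule: rtrancl_induct) (auto intro: assms(3))

lemma funpow_root: "f r = r \<Longrightarrow> (f ^^ m) r = r"
  by (induction m) auto

lemma tree_from_parent:
  assumes rV: "r \<in> V" and fV: "\<forall>v\<in>V. f v \<in> V" and fr: "f r = r"
    and reach: "\<forall>v\<in>V. \<exists>m. (f^^m) v = r"
  shows "spanning_tree V ((\<lambda>v. {v, f v}) ` (V - {r}))"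
proof -
  let ?T = "(\<lambda>v. {v, f v}) ` (V - {r})"
  have nfix: "f v \<noteq> v" if "v \<in> V" "v \<noteq> r" for v
  proof
    assume "f v = v"
    then have "(f^^m) v = v" for m by (rule funpow_root)
    then show False using reach that by metis
  qed
  have E: "\<forall>e\<in>?T. e \<subseteq> V \<and> card e = 2"
  proof
    fix e assume "e \<in> ?T"
    then obtain v where "v \<in> V" "v \<noteq> r" "e = {v, f v}" by auto
    moreover then have "f v \<noteq> v" using nfix by auto
    ultimately show "e \<subseteq> V \<and> card e = 2" using fV by auto
  qed
  have toroot: "\<forall>v\<in>V. (f^^m) v = r \<longrightarrow> (v, r) \<in> (edge_rel ?T)\<^sup>*" for m
  proof (induction m)
    case 0 then show ?case by simp
  next
    case (Suc m)
    show ?case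
    proof (intro ballI impI)
      fix v assume v: "v \<in> V" "(f ^^ Suc m) v = r"
      show "(v, r) \<in> (edge_rel ?T)\<^sup>*"
      proof (cases "v = r")
        case True then show ?thesis by simp
      next
        case False
        then have "(v, f v) \<in> edge_rel ?T" using v unfolding edge_rel_def by auto
        moreover have "(f v, r) \<in> (edge_rel ?T)\<^sup>*"
          using Suc.IH fV v by (simp add: funpow_Suc_right del: funpow.simps)
        ultimately show ?thesis by (rule converse_rtrancl_into_rtrancl)
      qed
    qed
  qed
  have C: "\<forall>u\<in>V. \<forall>w\<in>V. (u, w) \<in> (edge_rel ?T)\<^sup>*"
  proof (intro ballI)
    fix u w assume "u \<in> V" "w \<in> V"
    then have "(u, r) \<in> (edge_rel ?T)\<^sup>*" "(w, r) \<in> (edge_rel ?T)\<^sup>*" using toroot reach by blast+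
    then show "(u, w) \<in> (edge_rel ?T)\<^sup>*" using edge_rel_rtrancl_sym rtrancl_trans by metis
  qed
  have A: "\<forall>e\<in>?T. \<forall>a b. e = {a, b} \<longrightarrow> (a, b) \<notin> (edge_rel (?T - {e}))\<^sup>*"
  proof (intro ballI allI impI)
    fix e a b assume e: "e \<in> ?T" and eab: "e = {a, b}"
    then obtain v where v: "v \<in> V" "v \<noteq> r" "e = {v, f v}" by auto
    define D where "D = {w. \<exists>m. (f^^m) w = v}"
    have closed: "p \<in> D \<longleftrightarrow> q \<in> D" if "(p, q) \<in> edge_rel (?T - {e})" for p q
    proof -
      from that obtain w where w: "w \<in> V" "w \<noteq> r" "{p, q} = {w, f w}" "{w, f w} \<noteq> e"
        unfolding edge_rel_def by auto
      have "w \<in> D \<longleftrightarrow> f w \<in> D"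
      proof
        assume "w \<in> D"
        then obtain m where m: "(f^^m) w = v" unfolding D_def by auto
        show "f w \<in> D"
        proof (cases m)
          case 0 then show ?thesis using m w v by auto
        next
          case (Suc m') then show ?thesis using m unfolding D_def
            by (auto simp: funpow_Suc_right simp del: funpow.simps)
        qed
      next
        assume "f w \<in> D"
        then obtain m where m: "(f^^m) (f w) = v" unfolding D_def by auto
        then have "(f^^(Suc m)) w = v" by (simp add: funpow_Suc_right del: funpow.simps)
        then show "w \<in> D" unfolding D_def by blast
      qed
      then show ?thesis using w(3) by (auto simp: doubleton_eq_iff)
    qed
    have vD: "v \<in> D" unfolding D_def by (rule CollectI, rule exI[of _ 0], simp)
    have fvD: "f v \<notin> D"
    proof
      assume "f v \<in> D"
      then obtain m where m: "(f^^m) (f v) = v" unfolding D_def by auto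
      then have cyc: "(f^^(Suc m)) v = v" by (simp add: funpow_Suc_right del: funpow.simps)
      have per: "(f^^(t * Suc m)) v = v" for t
      proof (induction t)
        case 0 then show ?case by simp
      next
        case (Suc t)
        have eq: "Suc t * Suc m = Suc m + t * Suc m" by simp
        have "(f^^(Suc t * Suc m)) v = (f^^(Suc m)) ((f^^(t * Suc m)) v)"
          by (simp only: eq funpow_add o_apply)
        then show ?case using Suc cyc by simp
      qed
      obtain M where M: "(f^^M) v = r" using reach v by auto
      have eq: "M * Suc m = M * m + M" by simp
      have "(f^^(M * Suc m)) v = (f^^(M * m)) ((f^^M) v)"
        by (simp only: eq funpow_add o_apply)
      also have "\<dots> = r" using M fr funpow_root by metis
      finally show False using per v by metis
    qed
    have inv: "(p, q) \<in> (edge_rel (?T - {e}))\<^sup>* \<Longrightarrow> (p \<in> D \<longleftrightarrow> q \<in> D)" for p q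
      by (induction rule: rtrancl_induct) (use closed in auto)
    show "(a, b) \<notin> (edge_rel (?T - {e}))\<^sup>*"
    proof
      assume "(a, b) \<in> (edge_rel (?T - {e}))\<^sup>*"
      then have "a \<in> D \<longleftrightarrow> b \<in> D" by (rule inv)
      moreover have "{a, b} = {v, f v}" using eab v by simp
      ultimately show False using vD fvD by (auto simp: doubleton_eq_iff)
    qed
  qed
  show ?thesis unfolding spanning_tree_def using E C A by blast
qed


definition Tof :: "nat \<Rightarrow> nat list \<Rightarrow> (nat \<Rightarrow> nat) \<Rightarrow> (nat \<Rightarrow> bool) \<Rightarrow> nat set set" where
  "Tof v0 vs \<sigma> c = (\<lambda>j. if c j then {v0, vs!j} else {vs!j, vs!(\<sigma> j)}) ` {..<length vs}"

locale wh =
  fixes v0 :: nat and vs :: "nat list"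
  assumes len: "3 \<le> length vs" and dist: "distinct (v0 # vs)"
begin

abbreviation "k \<equiv> length vs"
abbreviation "W \<equiv> wheel_edges v0 vs"
abbreviation "V \<equiv> wheel_vertices v0 vs"

lemma x_inj: "i < k \<Longrightarrow> j < k \<Longrightarrow> vs ! i = vs ! j \<longleftrightarrow> i = j"
  using dist by (simp add: nth_eq_iff_index_eq)

lemma x_ne: "i < k \<Longrightarrow> vs ! i \<noteq> v0"
  using dist by (auto simp: in_set_conv_nth)

lemma W_eq: "W = (\<lambda>i. {v0, vs!i}) ` {..<k} \<union> (\<lambda>i. {vs!i, vs!((i+1) mod k)}) ` {..<k}"
  unfolding wheel_edges_def by auto

lemma V_eq: "V = insert v0 ((\<lambda>i. vs!i) ` {..<k})"
  unfolding wheel_vertices_def by (auto simp: in_set_conv_nth)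

lemma mod_ne: "i < k \<Longrightarrow> (i+1) mod k \<noteq> i"
  using len by (cases "Suc i = k") auto

lemma W_card2: "e \<in> W \<Longrightarrow> card e = 2"
proof -
  assume "e \<in> W"
  then consider (s) i where "i < k" "e = {v0, vs!i}" | (r) i where "i < k" "e = {vs!i, vs!((i+1) mod k)}"
    unfolding W_eq by auto
  then show ?thesis
  proof cases
    case s then show ?thesis using x_ne[of i] by auto
  next
    case r
    have "0 < k" using len by auto
    then have "(i+1) mod k < k" by simp
    then have "vs!i \<noteq> vs!((i+1) mod k)" using x_inj r mod_ne by metis
    then show ?thesis using r by auto
  qed
qed

lemma W_sub: "e \<in> W \<Longrightarrow> e \<subseteq> V"
proof -
  assume "e \<in> W"
  then consider (s) i where "i < k" "e = {v0, vs!i}" | (r) i where "i < k" "e = {vs!i, vs!((i+1) mod k)}"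
    unfolding W_eq by auto
  then show ?thesis
  proof cases
    case s then show ?thesis unfolding V_eq by auto
  next
    case r
    have "0 < k" using len by auto
    then have "(i+1) mod k < k" by simp
    then show ?thesis using r unfolding V_eq by auto
  qed
qed

lemma finite_W: "finite W"
  unfolding W_eq by auto

end

locale wsig = wh +
  fixes \<sigma> :: "nat \<Rightarrow> nat"
  assumes sig_lt: "j < k \<Longrightarrow> \<sigma> j < k"
    and sig_inj: "inj_on \<sigma> {..<k}"
    and sig_surj: "\<sigma> ` {..<k} = {..<k}"
    and sig_reach: "i < k \<Longrightarrow> j < k \<Longrightarrow> \<exists>m. (\<sigma>^^m) i = j"
    and sig_ne1: "j < k \<Longrightarrow> \<sigma> j \<noteq> j"
    and sig_ne2: "j < k \<Longrightarrow> \<sigma> (\<sigma> j) \<noteq> j"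
    and sig_rims: "(\<lambda>j. {vs!j, vs!(\<sigma> j)}) ` {..<k} = (\<lambda>i. {vs!i, vs!((i+1) mod k)}) ` {..<k}"
begin

abbreviation "em c j \<equiv> (if c j then {v0, vs!j} else {vs!j, vs!(\<sigma> j)})"

lemma em_eq:
  assumes "j < k" "t < k" "em c j = em c' t"
  shows "j = t \<and> c j = c' t"
proof -
  have a: "vs!j \<noteq> v0" "vs!t \<noteq> v0" "vs!(\<sigma> j) \<noteq> v0" "vs!(\<sigma> t) \<noteq> v0"
    using x_ne sig_lt assms by auto
  show ?thesis
  proof (cases "c j")
    case cj: True
    show ?thesis
    proof (cases "c' t")
      case True
      then show ?thesis using cj assms a x_inj by (auto simp: doubleton_eq_iff)
    next
      case False
      then show ?thesis using cj assms a by (auto simp: doubleton_eq_iff)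
    qed
  next
    case cj: False
    show ?thesis
    proof (cases "c' t")
      case True
      then show ?thesis using cj assms a by (auto simp: doubleton_eq_iff)
    next
      case False
      then have "{vs!j, vs!(\<sigma> j)} = {vs!t, vs!(\<sigma> t)}" using cj assms by auto
      then have "(j = t) \<or> (j = \<sigma> t \<and> \<sigma> j = t)"
        using x_inj sig_lt assms(1,2) by (auto simp: doubleton_eq_iff)
      then have "j = t" using sig_ne2 assms by auto
      then show ?thesis using cj False by auto
    qed
  qed
qed

lemma em_inj: "inj_on (em c) {..<k}"
  by (rule inj_onI) (use em_eq in blast)

lemma card_Tof: "card (Tof v0 vs \<sigma> c) = k"
  unfolding Tof_def using em_inj card_image by fastforce

lemma em_W: "j < k \<Longrightarrow> em c j \<in> W"
proof -
  assume j: "j < k"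
  have "{vs!j, vs!(\<sigma> j)} \<in> W" using sig_rims j unfolding W_eq by blast
  then show ?thesis using j unfolding W_eq by auto
qed

lemma Tof_sub: "Tof v0 vs \<sigma> c \<subseteq> W"
  unfolding Tof_def by (rule image_subsetI, rule em_W, simp)

lemma W_em: "W = Tof v0 vs \<sigma> c \<union> Tof v0 vs \<sigma> (\<lambda>j. \<not> c j)"
proof
  show "Tof v0 vs \<sigma> c \<union> Tof v0 vs \<sigma> (\<lambda>j. \<not> c j) \<subseteq> W" using Tof_sub by blast
  show "W \<subseteq> Tof v0 vs \<sigma> c \<union> Tof v0 vs \<sigma> (\<lambda>j. \<not> c j)"
  proof
    fix e assume "e \<in> W"
    then consider (s) i where "i < k" "e = {v0, vs!i}" | (r) i where "i < k" "e = {vs!i, vs!(\<sigma> i)}"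
      unfolding W_eq sig_rims[symmetric] by auto
    then show "e \<in> Tof v0 vs \<sigma> c \<union> Tof v0 vs \<sigma> (\<lambda>j. \<not> c j)"
    proof cases
      case s then show ?thesis unfolding Tof_def by (cases "c i") force+
    next
      case r then show ?thesis unfolding Tof_def by (cases "c i") force+
    qed
  qed
qed

lemma Tof_compl: "W - Tof v0 vs \<sigma> c = Tof v0 vs \<sigma> (\<lambda>j. \<not> c j)"
proof -
  have "Tof v0 vs \<sigma> c \<inter> Tof v0 vs \<sigma> (\<lambda>j. \<not> c j) = {}"
  proof (rule ccontr)
    assume "Tof v0 vs \<sigma> c \<inter> Tof v0 vs \<sigma> (\<lambda>j. \<not> c j) \<noteq> {}"
    then obtain e where e: "e \<in> Tof v0 vs \<sigma> c" "e \<in> Tof v0 vs \<sigma> (\<lambda>j. \<not> c j)" by blast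
    from e(1) obtain j where j: "j < k" "e = em c j" unfolding Tof_def by blast
    from e(2) obtain t where t: "t < k" "e = em (\<lambda>j. \<not> c j) t" unfolding Tof_def by blast
    have h: "em c j = em (\<lambda>j. \<not> c j) t" using j t by auto
    have "j = t \<and> c j = (\<not> c t)" using em_eq[of j t c "\<lambda>j. \<not> c j", OF j(1) t(1) h] by blast
    then show False by blast
  qed
  then show ?thesis using W_em[of c] by blast
qed

end


context wsig begin

lemma V_minus: "V - {v0} = (\<lambda>i. vs!i) ` {..<k}"
  unfolding V_eq using x_ne by auto

lemma Tof_tree:
  assumes ex: "\<exists>j<k. c j"
  shows "spanning_tree V (Tof v0 vs \<sigma> c)"
proof -
  define ix where "ix y = the_inv_into {..<k} (\<lambda>i. vs!i) y" for y
  have injx: "inj_on (\<lambda>i. vs!i) {..<k}" using x_inj by (auto intro: inj_onI)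
  have ix: "ix (vs!j) = j" if "j < k" for j
    unfolding ix_def using the_inv_into_f_f[OF injx] that by auto
  define f where "f y = (if y = v0 then v0 else if c (ix y) then v0 else vs!(\<sigma> (ix y)))" for y
  have fx: "f (vs!j) = (if c j then v0 else vs!(\<sigma> j))" if "j < k" for j
    using ix that x_ne unfolding f_def by auto
  have fv0: "f v0 = v0" unfolding f_def by simp
  have fV: "\<forall>v\<in>V. f v \<in> V"
  proof
    fix v assume "v \<in> V"
    then consider "v = v0" | j where "j < k" "v = vs!j" unfolding V_eq by auto
    then show "f v \<in> V"
    proof cases
      case 1 then show ?thesis using fv0 unfolding V_eq by auto
    next
      case 2 then show ?thesis using fx sig_lt unfolding V_eq by auto
    qed
  qed
  have step: "\<forall>i<k. c ((\<sigma>^^m) i) \<longrightarrow> (\<exists>m'. (f^^m') (vs!i) = v0)" for m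
  proof (induction m)
    case 0
    then show ?case using fx by (auto intro!: exI[of _ 1])
  next
    case (Suc m)
    show ?case
    proof (intro allI impI)
      fix i assume i: "i < k" "c ((\<sigma> ^^ Suc m) i)"
      show "\<exists>m'. (f ^^ m') (vs ! i) = v0"
      proof (cases "c i")
        case True then show ?thesis using fx i by (auto intro!: exI[of _ 1])
      next
        case False
        have "c ((\<sigma> ^^ m) (\<sigma> i))" using i by (simp add: funpow_Suc_right del: funpow.simps)
        then obtain m' where "(f ^^ m') (vs ! \<sigma> i) = v0" using Suc.IH sig_lt i by blast
        moreover have "f (vs!i) = vs ! \<sigma> i" using fx i False by simp
        ultimately have "(f ^^ Suc m') (vs ! i) = v0" by (simp add: funpow_Suc_right del: funpow.simps)
        then show ?thesis by blast
      qed
    qed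
  qed
  have reach: "\<forall>v\<in>V. \<exists>m. (f^^m) v = v0"
  proof
    fix v assume "v \<in> V"
    then consider "v = v0" | i where "i < k" "v = vs!i" unfolding V_eq by auto
    then show "\<exists>m. (f^^m) v = v0"
    proof cases
      case 1 then show ?thesis by (auto intro!: exI[of _ 0])
    next
      case 2
      obtain j0 where j0: "j0 < k" "c j0" using ex by auto
      obtain m where "(\<sigma>^^m) i = j0" using sig_reach 2 j0 by blast
      then show ?thesis using step 2 j0 by auto
    qed
  qed
  have v0V: "v0 \<in> V" unfolding V_eq by simp
  have sp: "spanning_tree V ((\<lambda>v. {v, f v}) ` (V - {v0}))"
    by (rule tree_from_parent[OF v0V fV fv0 reach])
  have eq: "(\<lambda>v. {v, f v}) ` (V - {v0}) = Tof v0 vs \<sigma> c"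
    unfolding V_minus Tof_def image_image
  proof (rule image_cong)
    fix j assume "j \<in> {..<k}"
    then show "{vs ! j, f (vs ! j)} = em c j" using fx[of j] by (auto simp: insert_commute)
  qed simp
  show ?thesis using sp unfolding eq .
qed

lemma Tof_coupled:
  assumes "\<exists>j<k. c j" "\<exists>j<k. \<not> c j"
  shows "coupled_tree v0 vs (Tof v0 vs \<sigma> c)"
  unfolding coupled_tree_def
  using Tof_sub Tof_tree[OF assms(1)] Tof_tree[of "\<lambda>j. \<not> c j"] assms(2) Tof_compl[of c] by auto

lemma Tof_cmp:
  assumes ex: "\<exists>j<k. c j \<noteq> c' j"
    and dom: "\<forall>j<k. c j \<noteq> c' j \<longrightarrow> edge_gt (em c' j) (em c j)"
  shows "set_gt (Tof v0 vs \<sigma> c') (Tof v0 vs \<sigma> c)"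
proof -
  define D where "D = {j. j < k \<and> c j \<noteq> c' j}"
  have mem: "em d j \<in> Tof v0 vs \<sigma> d'  \<longleftrightarrow> d j = d' j" if "j < k" for d d' j
  proof
    assume "em d j \<in> Tof v0 vs \<sigma> d'"
    then obtain t where t: "t < k" "em d j = em d' t" unfolding Tof_def by auto
    show "d j = d' j" using em_eq[of j t d d', OF that t(1) t(2)] by (metis)
  next
    assume "d j = d' j"
    then have "em d j = em d' j" by simp
    then show "em d j \<in> Tof v0 vs \<sigma> d'" unfolding Tof_def using that by blast
  qed
  have dd: "Tof v0 vs \<sigma> d' - Tof v0 vs \<sigma> d = em d' ` D"
    if D: "D = {j. j < k \<and> d j \<noteq> d' j}" for d d'
  proof (rule equalityI; rule subsetI)
    fix e assume e: "e \<in> Tof v0 vs \<sigma> d' - Tof v0 vs \<sigma> d"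
    then obtain j where j: "j < k" "e = em d' j" unfolding Tof_def by blast
    then have "d' j \<noteq> d j" using mem[of j d' d] e by blast
    then show "e \<in> em d' ` D" using j D by auto
  next
    fix e assume "e \<in> em d' ` D"
    then obtain j where j: "j < k" "d j \<noteq> d' j" "e = em d' j" using D by blast
    have "e \<in> Tof v0 vs \<sigma> d'" unfolding Tof_def using j by blast
    moreover have "e \<notin> Tof v0 vs \<sigma> d" using mem[of j d' d] j by metis
    ultimately show "e \<in> Tof v0 vs \<sigma> d' - Tof v0 vs \<sigma> d" by blast
  qed
  have d1: "Tof v0 vs \<sigma> c' - Tof v0 vs \<sigma> c = em c' ` D" by (rule dd) (rule D_def)
  have d2: "Tof v0 vs \<sigma> c - Tof v0 vs \<sigma> c' = em c ` D" by (rule dd) (auto simp: D_def)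
  let ?S = "em c' ` D \<union> em c ` D"
  have fS: "finite ?S" unfolding D_def by auto
  have neS: "?S \<noteq> {}" using ex unfolding D_def by auto
  have c2S: "\<forall>e\<in>?S. card e = 2"
  proof
    fix e assume "e \<in> ?S"
    then have "e \<in> (Tof v0 vs \<sigma> c' - Tof v0 vs \<sigma> c) \<union> (Tof v0 vs \<sigma> c - Tof v0 vs \<sigma> c')"
      by (simp only: d1 d2)
    then have "e \<in> W" using Tof_sub by blast
    then show "card e = 2" by (rule W_card2)
  qed
  obtain m where m: "m \<in> ?S" "\<forall>y\<in>?S. y \<noteq> m \<longrightarrow> edge_gt m y"
    using edge_max[OF fS neS c2S] by (elim bexE) (rule that)
  have "m \<in> em c' ` D"
  proof (rule ccontr)
    assume "m \<notin> em c' ` D"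
    then obtain j where j: "j \<in> D" "m = em c j" using m by auto
    have jk: "j < k" "c j \<noteq> c' j" using j unfolding D_def by auto
    have ne: "em c' j \<noteq> m"
    proof
      assume "em c' j = m"
      then show False using em_eq[OF jk(1) jk(1), of c' c] j jk by auto
    qed
    have "em c' j \<in> ?S" using j by auto
    then have "edge_gt m (em c' j)" using m ne by blast
    moreover have "edge_gt (em c' j) m" using dom jk j by auto
    ultimately show False using edge_gt_asym by blast
  qed
  then show ?thesis unfolding set_gt_def card_Tof d1 d2 using m by auto
qed

end


definition nx :: "nat \<Rightarrow> nat \<Rightarrow> nat" where "nx k i = (i + 1) mod k"
definition pv :: "nat \<Rightarrow> nat \<Rightarrow> nat" where "pv k i = (if i = 0 then k - 1 else i - 1)"

lemma st_conn: "spanning_tree V T \<Longrightarrow> u \<in> V \<Longrightarrow> w \<in> V \<Longrightarrow> (u, w) \<in> (edge_rel T)\<^sup>*"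
  unfolding spanning_tree_def by blast

lemma st_acyc: "spanning_tree V T \<Longrightarrow> {a, b} \<in> T \<Longrightarrow> (a, b) \<notin> (edge_rel (T - {{a, b}}))\<^sup>*"
  unfolding spanning_tree_def by blast

context wh begin

lemma nx_alt: "i < k \<Longrightarrow> nx k i = (if Suc i = k then 0 else Suc i)"
  unfolding nx_def by (cases "Suc i = k") auto

lemma nx_lt: "i < k \<Longrightarrow> nx k i < k"
proof -
  have "0 < k" using len by auto
  then show ?thesis unfolding nx_def by simp
qed

lemma pv_lt: "i < k \<Longrightarrow> pv k i < k"
  unfolding pv_def using len by auto

lemma pv_nx: "i < k \<Longrightarrow> pv k (nx k i) = i"
  using nx_alt[of i] len unfolding pv_def by auto

lemma nx_pv: "i < k \<Longrightarrow> nx k (pv k i) = i"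
  using nx_alt[of "pv k i"] len pv_lt[of i] unfolding pv_def by (auto split: if_splits)

lemma nx_inj: "inj_on (nx k) {..<k}"
  by (rule inj_onI) (metis lessThan_iff pv_nx)

lemma pv_inj: "inj_on (pv k) {..<k}"
  by (rule inj_onI) (metis lessThan_iff nx_pv)

lemma nx_surj: "nx k ` {..<k} = {..<k}"
proof
  show "nx k ` {..<k} \<subseteq> {..<k}" using nx_lt by auto
  show "{..<k} \<subseteq> nx k ` {..<k}"
  proof
    fix x assume "x \<in> {..<k}"
    then show "x \<in> nx k ` {..<k}" by (metis nx_pv pv_lt image_eqI lessThan_iff)
  qed
qed

lemma pv_surj: "pv k ` {..<k} = {..<k}"
proof
  show "pv k ` {..<k} \<subseteq> {..<k}" using pv_lt by auto
  show "{..<k} \<subseteq> pv k ` {..<k}"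
  proof
    fix x assume "x \<in> {..<k}"
    then show "x \<in> pv k ` {..<k}" by (metis pv_nx nx_lt image_eqI lessThan_iff)
  qed
qed

lemma nx_pow: "i < k \<Longrightarrow> (nx k ^^ m) i = (i + m) mod k"
proof (induction m)
  case 0 then show ?case by simp
next
  case (Suc m)
  then show ?case unfolding nx_def by (simp add: mod_Suc_eq)
qed

lemma nx_reach: "i < k \<Longrightarrow> j < k \<Longrightarrow> \<exists>m. (nx k ^^ m) i = j"
proof -
  assume ij: "i < k" "j < k"
  have "(nx k ^^ (j + k - i)) i = (i + (j + k - i)) mod k" using nx_pow ij by blast
  also have "i + (j + k - i) = j + k" using ij by auto
  also have "(j + k) mod k = j" using ij by simp
  finally show ?thesis by blast
qed

lemma pv_pow_nx: "i < k \<Longrightarrow> (pv k ^^ m) ((nx k ^^ m) i) = i"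
proof (induction m arbitrary: i)
  case 0 then show ?case by simp
next
  case (Suc m)
  have "(nx k ^^ Suc m) i = (nx k ^^ m) (nx k i)" by (simp add: funpow_Suc_right del: funpow.simps)
  moreover have "(pv k ^^ Suc m) y = pv k ((pv k ^^ m) y)" for y by simp
  ultimately have "(pv k ^^ Suc m) ((nx k ^^ Suc m) i) = pv k (nx k i)"
    using Suc.IH[of "nx k i"] nx_lt Suc.prems by simp
  then show ?case using pv_nx Suc.prems by simp
qed

lemma pv_reach: "i < k \<Longrightarrow> j < k \<Longrightarrow> \<exists>m. (pv k ^^ m) i = j"
proof -
  assume ij: "i < k" "j < k"
  obtain m where "(nx k ^^ m) j = i" using nx_reach ij by blast
  then show ?thesis using pv_pow_nx[of j m] ij by metis
qed

lemma nx_ne1: "i < k \<Longrightarrow> nx k i \<noteq> i"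
  using mod_ne unfolding nx_def by simp

lemma nx_ne2: "i < k \<Longrightarrow> nx k (nx k i) \<noteq> i"
  using nx_alt nx_lt len by (auto split: if_splits)

lemma pv_ne1: "i < k \<Longrightarrow> pv k i \<noteq> i"
  using len unfolding pv_def by auto

lemma pv_ne2: "i < k \<Longrightarrow> pv k (pv k i) \<noteq> i"
  using len unfolding pv_def by auto

lemma wsig_nx: "wsig v0 vs (nx k)"
  unfolding wsig_def wsig_axioms_def
  using wh_axioms nx_lt nx_inj nx_surj nx_reach nx_ne1 nx_ne2 by (simp add: nx_def)

lemma wsig_pv: "wsig v0 vs (pv k)"
proof -
  have r: "(\<lambda>j. {vs!j, vs!(pv k j)}) ` {..<k} = (\<lambda>i. {vs!i, vs!((i+1) mod k)}) ` {..<k}"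
  proof -
    have "(\<lambda>j. {vs!j, vs!(pv k j)}) ` {..<k} = (\<lambda>j. {vs!(pv k j), vs!((pv k j + 1) mod k)}) ` {..<k}"
      by (rule image_cong) (use nx_pv[unfolded nx_def] in \<open>auto simp: insert_commute\<close>)
    also have "\<dots> = (\<lambda>i. {vs!i, vs!((i+1) mod k)}) ` (pv k ` {..<k})" by (simp add: image_image)
    finally show ?thesis using pv_surj by simp
  qed
  show ?thesis
    unfolding wsig_def wsig_axioms_def
    using wh_axioms pv_lt pv_inj pv_surj pv_reach pv_ne1 pv_ne2 r by simp
qed

end

context wsig begin

lemma val_Tof: "val (Tof v0 vs \<sigma> c) y = card {j. j < k \<and> y \<in> em c j}"
proof -
  have eq1: "{e \<in> Tof v0 vs \<sigma> c. y \<in> e} = em c ` {j. j < k \<and> y \<in> em c j}"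
    unfolding Tof_def by auto
  have inj: "inj_on (em c) {j. j < k \<and> y \<in> em c j}"
  proof (rule inj_on_subset[OF em_inj], rule subsetI)
    fix x assume "x \<in> {j. j < k \<and> y \<in> em c j}"
    then have "x < k" by (rule CollectE) (erule conjunct1)
    then show "x \<in> {..<k}" by (rule lessThan_iff[THEN iffD2])
  qed
  have "card {e \<in> Tof v0 vs \<sigma> c. y \<in> e} = card (em c ` {j. j < k \<and> y \<in> em c j})"
    by (simp only: eq1)
  also have "\<dots> = card {j. j < k \<and> y \<in> em c j}" by (rule card_image[OF inj])
  finally have "card {e \<in> Tof v0 vs \<sigma> c. y \<in> e} = card {j. j < k \<and> y \<in> em c j}" .
  then show ?thesis unfolding val_def .
qed

lemma val_v0: "val (Tof v0 vs \<sigma> c) v0 = card {j. j < k \<and> c j}"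
proof -
  have "{j. j < k \<and> v0 \<in> em c j} = {j. j < k \<and> c j}"
    using x_ne sig_lt by auto
  then show ?thesis using val_Tof by simp
qed

lemma val_x:
  assumes "i < k" "p < k" "\<sigma> p = i"
  shows "val (Tof v0 vs \<sigma> c) (vs!i) = (if c p then 1 else 2)"
proof -
  have mem: "vs!i \<in> em c j \<longleftrightarrow> j = i \<or> (\<not> c j \<and> j = p)" if "j < k" for j
  proof -
    have A: "vs!i = vs!j \<longleftrightarrow> j = i" using x_inj[OF assms(1) that] by blast
    have D: "\<sigma> j = i \<longleftrightarrow> j = p" using sig_inj assms that by (auto dest: inj_onD)
    have B: "vs!i = vs!(\<sigma> j) \<longleftrightarrow> j = p" using x_inj[OF assms(1) sig_lt[OF that]] D by auto
    have C: "vs!i \<noteq> v0" using x_ne[OF assms(1)] .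
    show ?thesis
    proof (cases "c j")
      case True
      then have "vs!i \<in> em c j \<longleftrightarrow> vs!i = v0 \<or> vs!i = vs!j" by simp
      then show ?thesis using A C True by blast
    next
      case False
      then have "vs!i \<in> em c j \<longleftrightarrow> vs!i = vs!j \<or> vs!i = vs!(\<sigma> j)" by simp
      then show ?thesis using A B False by blast
    qed
  qed
  have "{j. j < k \<and> vs!i \<in> em c j} = {j. j < k \<and> (j = i \<or> (\<not> c j \<and> j = p))}"
    using mem by blast
  also have "\<dots> = (if c p then {i} else {i, p})"
    using assms sig_ne1[of p] by auto
  finally have "{j. j < k \<and> vs!i \<in> em c j} = (if c p then {i} else {i, p})" .
  moreover have "p \<noteq> i" using sig_ne1[OF assms(2)] assms(3) by simp
  ultimately have "card {j. j < k \<and> vs!i \<in> em c j} = card (if c p then {i} else {i, p})" by (simp only:)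
  also have "\<dots> = (if c p then 1 else 2)" using \<open>p \<noteq> i\<close> by (cases "c p") simp_all
  finally have h1: "card {j. j < k \<and> vs!i \<in> em c j} = (if c p then 1 else 2)" .
  have h2: "val (Tof v0 vs \<sigma> c) (vs!i) = card {j. j < k \<and> vs!i \<in> em c j}" by (rule val_Tof)
  show ?thesis unfolding h2 by (rule h1)
qed

lemma Tof_spoke:
  assumes "spanning_tree V (Tof v0 vs \<sigma> c)"
  shows "\<exists>j<k. c j"
proof (rule ccontr)
  assume "\<not> (\<exists>j<k. c j)"
  then have nc: "\<forall>j<k. \<not> c j" by auto
  let ?S = "set vs"
  have "vs ! 0 \<in> ?S" by (rule nth_mem) (use len in auto)
  moreover have "vs ! 0 \<in> V" "v0 \<in> V" using \<open>vs ! 0 \<in> ?S\<close> unfolding wheel_vertices_def by auto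
  ultimately have "(vs ! 0, v0) \<in> (edge_rel (Tof v0 vs \<sigma> c))\<^sup>*"
    using st_conn[OF assms] by blast
  moreover have cl: "q \<in> ?S" if "(p, q) \<in> edge_rel (Tof v0 vs \<sigma> c)" "p \<in> ?S" for p q
  proof -
    have "{p, q} \<in> Tof v0 vs \<sigma> c" using that(1) unfolding edge_rel_def by simp
    then obtain j where j: "j < k" "{p, q} = em c j" unfolding Tof_def by (rule imageE) simp
    then have "{p, q} = {vs!j, vs!(\<sigma> j)}" using nc by simp
    moreover have "vs!j \<in> ?S" "vs!(\<sigma> j) \<in> ?S" using j sig_lt by auto
    ultimately show ?thesis by (auto simp: doubleton_eq_iff)
  qed
  ultimately have "v0 \<in> ?S" using closed_rtrancl[of "vs ! 0" v0 "edge_rel (Tof v0 vs \<sigma> c)" ?S] \<open>vs ! 0 \<in> ?S\<close> cl by blast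
  then show False using dist by simp
qed

end


context wh begin

lemma kpos: "0 < k" using len by auto

lemma sp_W: "i < k \<Longrightarrow> {v0, vs!i} \<in> W"
  unfolding W_eq by blast

lemma rm_W: "i < k \<Longrightarrow> {vs!i, vs!((i+1) mod k)} \<in> W"
  unfolding W_eq by blast

lemma modk_lt: "j mod k < k" using kpos by simp

lemma tri:
  assumes G: "spanning_tree V G" and i: "i < k"
  shows "\<not> ({v0, vs!i} \<in> G \<and> {vs!i, vs!((i+1) mod k)} \<in> G \<and> {v0, vs!((i+1) mod k)} \<in> G)"
proof
  assume h: "{v0, vs!i} \<in> G \<and> {vs!i, vs!((i+1) mod k)} \<in> G \<and> {v0, vs!((i+1) mod k)} \<in> G"
  let ?i' = "(i+1) mod k"
  have i': "?i' < k" by (rule modk_lt)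
  have ne: "?i' \<noteq> i" using mod_ne i by simp
  have xne: "vs!?i' \<noteq> vs!i" using x_inj[OF i' i] ne by simp
  let ?R = "edge_rel (G - {{v0, vs!i}})"
  have "{v0, vs!?i'} \<noteq> {v0, vs!i}" using xne x_ne i i' by (auto simp: doubleton_eq_iff)
  then have e1: "(v0, vs!?i') \<in> ?R" using h unfolding edge_rel_def by simp
  have "{vs!?i', vs!i} \<noteq> {v0, vs!i}" using x_ne i i' by (auto simp: doubleton_eq_iff)
  moreover have "{vs!?i', vs!i} = {vs!i, vs!?i'}" by (rule insert_commute)
  ultimately have e2: "(vs!?i', vs!i) \<in> ?R" using h unfolding edge_rel_def by simp
  have "(v0, vs!i) \<in> ?R\<^sup>*" using e1 e2 by (meson r_into_rtrancl rtrancl_into_rtrancl)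
  moreover have "(v0, vs!i) \<notin> ?R\<^sup>*" using st_acyc[OF G] h by blast
  ultimately show False by blast
qed

lemma nx_cancel: "t < k \<Longrightarrow> s < k \<Longrightarrow> (t+1) mod k = (s+1) mod k \<Longrightarrow> t = s"
  using nx_inj unfolding nx_def by (auto dest: inj_onD)

lemma nec_type:
  assumes cp: "coupled_tree v0 vs T"
  shows "(\<forall>j<k. ({v0, vs!j} \<in> T) \<noteq> ({vs!j, vs!((j+1) mod k)} \<in> T)) \<or>
         (\<forall>j<k. ({vs!j, vs!((j+1) mod k)} \<in> T) \<noteq> ({v0, vs!((j+1) mod k)} \<in> T))"
proof (rule ccontr)
  assume nAB: "\<not> ?thesis"
  have TW: "T \<subseteq> W" and sT: "spanning_tree V T" and sC: "spanning_tree V (W - T)"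
    using cp unfolding coupled_tree_def by auto
  define a where "a j = ({v0, vs!(j mod k)} \<in> T)" for j
  define b where "b j = ({vs!(j mod k), vs!((j mod k + 1) mod k)} \<in> T)" for j
  have sucm: "(j mod k + 1) mod k = Suc j mod k" for j by (simp add: mod_Suc_eq)
  have triT: "\<not> (a j \<and> b j \<and> a (Suc j))" for j
    using tri[OF sT modk_lt[of j]] unfolding a_def b_def sucm by blast
  have triC: "\<not> (\<not> a j \<and> \<not> b j \<and> \<not> a (Suc j))" for j
  proof
    assume h: "\<not> a j \<and> \<not> b j \<and> \<not> a (Suc j)"
    have "{v0, vs!(j mod k)} \<in> W - T" using h sp_W[OF modk_lt] unfolding a_def by blast
    moreover have "{vs!(j mod k), vs!((j mod k + 1) mod k)} \<in> W - T"
      using h rm_W[OF modk_lt] unfolding b_def by blast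
    moreover have "{v0, vs!((j mod k + 1) mod k)} \<in> W - T"
      using h sp_W[OF modk_lt[of "Suc j"]] unfolding a_def sucm by blast
    ultimately show False using tri[OF sC modk_lt[of j]] by blast
  qed
  have tr: "a j \<noteq> b j \<or> b j \<noteq> a (Suc j)" for j using triT[of j] triC[of j] by blast
  define AO where "AO j = (a j \<noteq> b j \<and> b j = a (Suc j))" for j
  define BO where "BO j = (a j = b j \<and> b j \<noteq> a (Suc j))" for j
  from nAB obtain j1 where j1: "j1 < k" "({v0, vs!j1} \<in> T) = ({vs!j1, vs!((j1+1) mod k)} \<in> T)" by blast
  from nAB obtain i1 where i1: "i1 < k" "({vs!i1, vs!((i1+1) mod k)} \<in> T) = ({v0, vs!((i1+1) mod k)} \<in> T)" by blast
  have "a j1 = b j1" using j1 unfolding a_def b_def by simp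
  then have BOj1: "BO j1" using tr[of j1] unfolding BO_def by blast
  have "b i1 = a (Suc i1)" using i1 unfolding a_def b_def by (simp add: mod_Suc_eq)
  then have AOi1: "AO i1" using tr[of i1] unfolding AO_def by blast
  have aper: "a (j + k) = a j" for j unfolding a_def by simp
  have bper: "b (j + k) = b j" for j unfolding b_def by simp
  have BOk: "BO (j1 + k)" using BOj1 unfolding BO_def using aper[of j1] bper[of j1] aper[of "Suc j1"] by simp
  define P where "P d = (0 < d \<and> (\<exists>i. AO i \<and> BO (i + d)))" for d
  have "P (j1 + k - i1)" unfolding P_def using AOi1 BOk i1 j1 by (auto intro!: exI[of _ i1])
  define d0 where "d0 = (LEAST d. P d)"
  have Pd0: "P d0" unfolding d0_def by (rule LeastI) fact
  have minP: "\<not> P d" if "d < d0" for d using not_less_Least that unfolding d0_def by blast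
  from Pd0 obtain i where d0pos: "0 < d0" and AOi: "AO i" and BOi: "BO (i + d0)"
    unfolding P_def by blast
  have both: "a (i+e) \<noteq> b (i+e) \<and> b (i+e) \<noteq> a (Suc (i+e))" if "0 < e" "e < d0" for e
  proof -
    have "\<not> AO (i+e)"
    proof
      assume "AO (i+e)"
      moreover have "i + e + (d0 - e) = i + d0" using that by simp
      ultimately have "P (d0 - e)" using BOi that unfolding P_def by (auto intro!: exI[of _ "i+e"])
      moreover have "d0 - e < d0" using that by simp
      ultimately show False using minP by blast
    qed
    moreover have "\<not> BO (i+e)"
    proof
      assume "BO (i+e)"
      then have "P e" using AOi that unfolding P_def by blast
      then show False using minP that by blast
    qed
    ultimately show ?thesis using tr[of "i+e"] unfolding AO_def BO_def by blast
  qed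
  define cc where "cc = a (Suc i)"
  have aconst: "\<forall>e. e < d0 \<longrightarrow> a (i + Suc e) = cc"
  proof
    fix e show "e < d0 \<longrightarrow> a (i + Suc e) = cc"
    proof (induction e)
      case 0 then show ?case unfolding cc_def by simp
    next
      case (Suc e)
      show ?case
      proof
        assume "Suc e < d0"
        then have "a (i + Suc e) \<noteq> b (i + Suc e) \<and> b (i + Suc e) \<noteq> a (Suc (i + Suc e))"
          using both[of "Suc e"] by simp
        then have "a (Suc (i + Suc e)) = a (i + Suc e)" by blast
        then show "a (i + Suc (Suc e)) = cc" using Suc \<open>Suc e < d0\<close> by simp
      qed
    qed
  qed
  have aval: "a (i + e) = cc" if "0 < e" "e \<le> d0" for e
    using aconst[rule_format, of "e - 1"] that by simp
  have bmid: "b (i + e) = (\<not> cc)" if "0 < e" "e < d0" for e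
    using both[OF that] aval[of e] that by auto
  have b0: "b i = cc" using AOi unfolding AO_def cc_def by simp
  have bd: "b (i + d0) = cc" using BOi aval[of d0] d0pos unfolding BO_def by simp
  define G where "G = (if cc then W - T else T)"
  have sG: "spanning_tree V G" unfolding G_def using sT sC by simp
  have GW: "G \<subseteq> W" unfolding G_def using TW by auto
  have Gmem: "e \<in> G \<longleftrightarrow> (e \<in> T) \<noteq> cc" if "e \<in> W" for e
    using that TW unfolding G_def by auto
  define S where "S = (\<lambda>e. vs!((i+e) mod k)) ` {e. 0 < e \<and> e \<le> d0}"
  have closed: "q \<in> S" if pq: "(p, q) \<in> edge_rel G" and pS: "p \<in> S" for p q
  proof -
    from pS obtain e where e: "0 < e" "e \<le> d0" "p = vs!((i+e) mod k)" unfolding S_def by blast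
    define jj where "jj = (i+e) mod k"
    have jj: "jj < k" unfolding jj_def by (rule modk_lt)
    have pqG: "{p, q} \<in> G" using pq unfolding edge_rel_def by simp
    then have "{p, q} \<in> W" using GW by blast
    then consider (s) t where "t < k" "{p, q} = {v0, vs!t}" | (r) t where "t < k" "{p, q} = {vs!t, vs!((t+1) mod k)}"
      unfolding W_eq by blast
    then show ?thesis
    proof cases
      case s
      have "p \<noteq> v0" using e(3) x_ne[OF jj] unfolding jj_def by simp
      moreover have "p \<in> {v0, vs!t}" using s(2) by (metis insertI1)
      ultimately have "p = vs!t" by blast
      then have "vs!t = vs!jj" using e(3) unfolding jj_def by (rule subst)
      then have "t = jj" using x_inj[OF s(1) jj] by blast
      then have "{v0, vs!jj} \<in> G" using pqG s(2) by simp
      then have "({v0, vs!jj} \<in> T) \<noteq> cc" using Gmem sp_W[OF jj] by blast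
      moreover have "({v0, vs!jj} \<in> T) = cc" using aval[OF e(1,2)] unfolding a_def jj_def by simp
      ultimately show ?thesis by blast
    next
      case r
      have rmG: "{vs!t, vs!((t+1) mod k)} \<in> G" using pqG r(2) by simp
      then have rmT: "({vs!t, vs!((t+1) mod k)} \<in> T) \<noteq> cc" using Gmem rm_W[OF r(1)] by blast
      have t1: "(t+1) mod k < k" by (rule modk_lt)
      from r(2) have "(p = vs!t \<and> q = vs!((t+1) mod k)) \<or> (p = vs!((t+1) mod k) \<and> q = vs!t)"
        by (auto simp: doubleton_eq_iff)
      then show ?thesis
      proof
        assume h: "p = vs!t \<and> q = vs!((t+1) mod k)"
        then have "vs!t = vs!jj" using e(3) unfolding jj_def by (metis)
        then have "t = jj" using x_inj[OF r(1) jj] by blast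
        then have "b (i+e) \<noteq> cc" using rmT unfolding b_def jj_def by simp
        then have "e \<noteq> d0" using bd by auto
        then have "e < d0" using e by simp
        moreover have "q = vs!((i + Suc e) mod k)" using h \<open>t = jj\<close> unfolding jj_def by (simp add: mod_Suc_eq)
        ultimately show ?thesis unfolding S_def by (auto intro!: image_eqI[of _ _ "Suc e"])
      next
        assume h: "p = vs!((t+1) mod k) \<and> q = vs!t"
        then have "vs!((t+1) mod k) = vs!jj" using e(3) unfolding jj_def by (metis)
        then have tj: "(t+1) mod k = jj" using x_inj[OF t1 jj] by blast
        have ie: "i + e = Suc (i + (e - 1))" using e by simp
        have "(t+1) mod k = ((i + (e - 1)) mod k + 1) mod k"
          using tj unfolding jj_def ie by (simp add: mod_Suc_eq)
        then have teq: "t = (i + (e - 1)) mod k" using nx_cancel[OF r(1) modk_lt] by blast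
        show ?thesis
        proof (cases "e = 1")
          case True
          then have "t = i mod k" using teq by simp
          then have "b i \<noteq> cc" using rmT unfolding b_def by simp
          then show ?thesis using b0 by simp
        next
          case False
          then have "0 < e - 1" "e - 1 < d0" using e by auto
          then have "q = vs!((i + (e - 1)) mod k)" using h teq by simp
          then show ?thesis unfolding S_def using \<open>0 < e - 1\<close> \<open>e - 1 < d0\<close>
            by (auto intro!: image_eqI[of _ _ "e - 1"])
        qed
      qed
    qed
  qed
  have s1: "vs!((i+1) mod k) \<in> S" unfolding S_def using d0pos by (auto intro!: image_eqI[of _ _ 1])
  have "vs!((i+1) mod k) \<in> V" "v0 \<in> V" unfolding V_eq using modk_lt by auto
  then have "(vs!((i+1) mod k), v0) \<in> (edge_rel G)\<^sup>*" using st_conn[OF sG] by blast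
  then have "v0 \<in> S" using closed_rtrancl[of _ v0 "edge_rel G" S] s1 closed by blast
  then show False unfolding S_def using x_ne modk_lt by auto
qed

end


lemma edge_sp_rm1:
  fixes v0 x y :: nat
  assumes "x \<noteq> y" "x \<noteq> v0" "y \<noteq> v0" "v0 < y"
  shows "edge_gt {v0, x} {x, y}"
proof (cases "x < v0")
  case True
  then have "Min {v0, x} = x" "Min {x, y} = x" "Max {v0, x} = v0" "Max {x, y} = y" using assms by auto
  then show ?thesis unfolding edge_gt_def using assms by simp
next
  case False
  then have "Min {v0, x} = v0" "Min {x, y} = min x y" using assms by auto
  then show ?thesis unfolding edge_gt_def using assms False by simp
qed

lemma edge_sp_rm2:
  fixes v0 x y :: nat
  assumes "x \<noteq> y" "x \<noteq> v0" "y \<noteq> v0" "y < v0"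
  shows "edge_gt {x, y} {v0, x}"
proof (cases "y < x")
  case True
  then have "Min {x, y} = y" "Min {v0, x} = min v0 x" using assms by auto
  then show ?thesis unfolding edge_gt_def using assms True by simp
next
  case False
  then have "Min {v0, x} = x" "Min {x, y} = x" "Max {v0, x} = v0" "Max {x, y} = y" using assms by auto
  then show ?thesis unfolding edge_gt_def using assms False by simp
qed

context wsig begin

lemma no_better:
  assumes max: "\<forall>T'. coupled_tree v0 vs T' \<and> T' \<noteq> Tof v0 vs \<sigma> c \<longrightarrow> set_gt (Tof v0 vs \<sigma> c) T'"
    and c1: "\<exists>j<k. c' j" and c2: "\<exists>j<k. \<not> c' j" and df: "\<exists>j<k. c j \<noteq> c' j"
    and dom: "\<forall>j<k. c j \<noteq> c' j \<longrightarrow> edge_gt (em c' j) (em c j)"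
  shows False
proof -
  have cp: "coupled_tree v0 vs (Tof v0 vs \<sigma> c')" using Tof_coupled c1 c2 by blast
  have gt: "set_gt (Tof v0 vs \<sigma> c') (Tof v0 vs \<sigma> c)" by (rule Tof_cmp[OF df dom])
  show False
  proof (cases "Tof v0 vs \<sigma> c' = Tof v0 vs \<sigma> c")
    case True then show False using gt set_gt_irrefl by simp
  next
    case False
    then have "set_gt (Tof v0 vs \<sigma> c) (Tof v0 vs \<sigma> c')" using max cp by blast
    then show False using gt set_gt_asym by blast
  qed
qed

lemma xs_ne: "j < k \<Longrightarrow> vs!j \<noteq> vs!(\<sigma> j)"
proof -
  assume j: "j < k"
  have "\<sigma> j \<noteq> j" using sig_ne1[OF j] .
  then show ?thesis using x_inj[OF j sig_lt[OF j]] by metis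
qed

lemma caseI:
  assumes max: "\<forall>T'. coupled_tree v0 vs T' \<and> T' \<noteq> Tof v0 vs \<sigma> c \<longrightarrow> set_gt (Tof v0 vs \<sigma> c) T'"
    and nc: "\<exists>j<k. \<not> c j" and small: "\<forall>j<k. v0 < vs!j"
  shows "card {j. j < k \<and> c j} = k - 1"
proof -
  obtain j0 where j0: "j0 < k" "\<not> c j0" using nc by blast
  have "{j. j < k \<and> c j} \<subseteq> {..<k} - {j0}" using j0 by auto
  then have le: "card {j. j < k \<and> c j} \<le> k - 1" using card_mono[of "{..<k} - {j0}"] j0 by fastforce
  have "\<not> card {j. j < k \<and> c j} < k - 1"
  proof
    assume lt: "card {j. j < k \<and> c j} < k - 1"
    have "\<exists>j1<k. j1 \<noteq> j0 \<and> \<not> c j1"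
    proof (rule ccontr)
      assume "\<not> ?thesis"
      then have "{..<k} - {j0} \<subseteq> {j. j < k \<and> c j}" by auto
      then have "card ({..<k} - {j0}) \<le> card {j. j < k \<and> c j}" by (intro card_mono) auto
      then show False using lt j0 by simp
    qed
    then obtain j1 where j1: "j1 < k" "j1 \<noteq> j0" "\<not> c j1" by blast
    define c' where "c' = c(j1 := True)"
    show False
    proof (rule no_better[OF max, of c'])
      show "\<exists>j<k. c' j" using j1 unfolding c'_def by auto
      show "\<exists>j<k. \<not> c' j" using j0 j1 unfolding c'_def by auto
      show "\<exists>j<k. c j \<noteq> c' j" using j1 unfolding c'_def by auto
      show "\<forall>j<k. c j \<noteq> c' j \<longrightarrow> edge_gt (em c' j) (em c j)"
      proof (intro allI impI)
        fix j assume j: "j < k" "c j \<noteq> c' j"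
        then have jj: "j = j1" unfolding c'_def by (cases "j = j1") auto
        have "edge_gt {v0, vs!j} {vs!j, vs!(\<sigma> j)}"
          by (rule edge_sp_rm1) (use xs_ne x_ne sig_lt small j in auto)
        then show "edge_gt (em c' j) (em c j)" using jj j1 unfolding c'_def by simp
      qed
    qed
  qed
  then show ?thesis using le by simp
qed

lemma caseII:
  assumes max: "\<forall>T'. coupled_tree v0 vs T' \<and> T' \<noteq> Tof v0 vs \<sigma> c \<longrightarrow> set_gt (Tof v0 vs \<sigma> c) T'"
    and pc: "\<exists>j<k. c j" and big: "\<forall>j<k. vs!j < v0"
  shows "card {j. j < k \<and> c j} = 1"
proof -
  obtain j0 where j0: "j0 < k" "c j0" using pc by blast
  have ge: "card {j. j < k \<and> c j} \<ge> 1"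
  proof -
    have "{j0} \<subseteq> {j. j < k \<and> c j}" using j0 by auto
    then show ?thesis using card_mono[of "{j. j < k \<and> c j}" "{j0}"] by simp
  qed
  have "\<not> card {j. j < k \<and> c j} > 1"
  proof
    assume gt: "card {j. j < k \<and> c j} > 1"
    have "\<exists>j1<k. j1 \<noteq> j0 \<and> c j1"
    proof (rule ccontr)
      assume "\<not> ?thesis"
      then have "{j. j < k \<and> c j} \<subseteq> {j0}" by auto
      then have "card {j. j < k \<and> c j} \<le> 1" using card_mono[of "{j0}"] by simp
      then show False using gt by simp
    qed
    then obtain j1 where j1: "j1 < k" "j1 \<noteq> j0" "c j1" by blast
    define c' where "c' = c(j1 := False)"
    show False
    proof (rule no_better[OF max, of c'])
      show "\<exists>j<k. c' j" using j0 j1 unfolding c'_def by auto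
      show "\<exists>j<k. \<not> c' j" using j1 unfolding c'_def by auto
      show "\<exists>j<k. c j \<noteq> c' j" using j1 unfolding c'_def by auto
      show "\<forall>j<k. c j \<noteq> c' j \<longrightarrow> edge_gt (em c' j) (em c j)"
      proof (intro allI impI)
        fix j assume j: "j < k" "c j \<noteq> c' j"
        then have jj: "j = j1" unfolding c'_def by (cases "j = j1") auto
        have "edge_gt {vs!j, vs!(\<sigma> j)} {v0, vs!j}"
          by (rule edge_sp_rm2) (use xs_ne x_ne sig_lt big j in auto)
        then show "edge_gt (em c' j) (em c j)" using jj j1 unfolding c'_def by simp
      qed
    qed
  qed
  then show ?thesis using ge by simp
qed

lemma caseIII:
  assumes max: "\<forall>T'. coupled_tree v0 vs T' \<and> T' \<noteq> Tof v0 vs \<sigma> c \<longrightarrow> set_gt (Tof v0 vs \<sigma> c) T'"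
    and lo: "\<exists>j<k. vs!j < v0" and hi: "\<exists>j<k. v0 < vs!j"
  shows "\<forall>j<k. c j = (v0 < vs!(\<sigma> j))"
proof (rule ccontr)
  assume nt: "\<not> ?thesis"
  define c' where "c' j = (v0 < vs!(\<sigma> j))" for j
  show False
  proof (rule no_better[OF max, of c'])
    obtain i where i: "i < k" "v0 < vs!i" using hi by blast
    then obtain p where "p < k" "\<sigma> p = i" using sig_surj by (metis imageE lessThan_iff)
    then show "\<exists>j<k. c' j" using i unfolding c'_def by auto
    obtain i2 where i2: "i2 < k" "vs!i2 < v0" using lo by blast
    then obtain p2 where "p2 < k" "\<sigma> p2 = i2" using sig_surj by (metis imageE lessThan_iff)
    then show "\<exists>j<k. \<not> c' j" using i2 unfolding c'_def by auto
    show "\<exists>j<k. c j \<noteq> c' j" using nt unfolding c'_def by auto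
    show "\<forall>j<k. c j \<noteq> c' j \<longrightarrow> edge_gt (em c' j) (em c j)"
    proof (intro allI impI)
      fix j assume j: "j < k" "c j \<noteq> c' j"
      have ne: "vs!j \<noteq> vs!(\<sigma> j)" "vs!j \<noteq> v0" "vs!(\<sigma> j) \<noteq> v0"
        using xs_ne x_ne sig_lt j by auto
      show "edge_gt (em c' j) (em c j)"
      proof (cases "c' j")
        case True
        then have "v0 < vs!(\<sigma> j)" unfolding c'_def .
        then have "edge_gt {v0, vs!j} {vs!j, vs!(\<sigma> j)}" using edge_sp_rm1 ne by blast
        then show ?thesis using True j by simp
      next
        case False
        then have "vs!(\<sigma> j) < v0" using ne unfolding c'_def by auto
        then have "edge_gt {vs!j, vs!(\<sigma> j)} {v0, vs!j}" using edge_sp_rm2 ne by blast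
        then show ?thesis using False j by simp
      qed
    qed
  qed
qed

end


context wh begin

lemma nec_Tof:
  assumes cp: "coupled_tree v0 vs T"
  shows "\<exists>\<sigma> c. wsig v0 vs \<sigma> \<and> T = Tof v0 vs \<sigma> c \<and> (\<exists>j<k. c j) \<and> (\<exists>j<k. \<not> c j)"
proof -
  define c where "c j = ({v0, vs!j} \<in> T)" for j
  have TW: "T \<subseteq> W" and sT: "spanning_tree V T" and sC: "spanning_tree V (W - T)"
    using cp unfolding coupled_tree_def by auto
  have "\<exists>\<sigma>. wsig v0 vs \<sigma> \<and> T = Tof v0 vs \<sigma> c"
    using nec_type[OF cp]
  proof
    assume A: "\<forall>j<k. ({v0, vs!j} \<in> T) \<noteq> ({vs!j, vs!((j+1) mod k)} \<in> T)"
    have "T = Tof v0 vs (nx k) c"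
    proof (rule equalityI; rule subsetI)
      fix e assume e: "e \<in> T"
      then have "e \<in> W" using TW by blast
      then consider (s) t where "t < k" "e = {v0, vs!t}" | (r) t where "t < k" "e = {vs!t, vs!((t+1) mod k)}"
        unfolding W_eq by blast
      then show "e \<in> Tof v0 vs (nx k) c"
      proof cases
        case s
        then have "c t" using e unfolding c_def by simp
        then have "e = (if c t then {v0, vs!t} else {vs!t, vs!(nx k t)})" using s by simp
        then show ?thesis unfolding Tof_def using s(1) by blast
      next
        case r
        then have "\<not> c t" using e A unfolding c_def by blast
        then have "e = (if c t then {v0, vs!t} else {vs!t, vs!(nx k t)})" using r unfolding nx_def by simp
        then show ?thesis unfolding Tof_def using r(1) by blast
      qed
    next
      fix e assume "e \<in> Tof v0 vs (nx k) c"
      then obtain t where t: "t < k" "e = (if c t then {v0, vs!t} else {vs!t, vs!(nx k t)})"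
        unfolding Tof_def by blast
      show "e \<in> T"
      proof (cases "c t")
        case True then show ?thesis using t unfolding c_def by simp
      next
        case False
        then have "{vs!t, vs!((t+1) mod k)} \<in> T" using A t(1) unfolding c_def by blast
        then show ?thesis using t False unfolding nx_def by simp
      qed
    qed
    then show ?thesis using wsig_nx by blast
  next
    assume B: "\<forall>j<k. ({vs!j, vs!((j+1) mod k)} \<in> T) \<noteq> ({v0, vs!((j+1) mod k)} \<in> T)"
    have "T = Tof v0 vs (pv k) c"
    proof (rule equalityI; rule subsetI)
      fix e assume e: "e \<in> T"
      then have "e \<in> W" using TW by blast
      then consider (s) t where "t < k" "e = {v0, vs!t}" | (r) t where "t < k" "e = {vs!t, vs!((t+1) mod k)}"
        unfolding W_eq by blast
      then show "e \<in> Tof v0 vs (pv k) c"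
      proof cases
        case s
        then have "c t" using e unfolding c_def by simp
        then have "e = (if c t then {v0, vs!t} else {vs!t, vs!(pv k t)})" using s by simp
        then show ?thesis unfolding Tof_def using s(1) by blast
      next
        case r
        define u where "u = (t+1) mod k"
        have u: "u < k" unfolding u_def by (rule modk_lt)
        have "\<not> c u" using e B r unfolding c_def u_def by blast
        moreover have "pv k u = t" using pv_nx[OF r(1)] unfolding u_def nx_def .
        ultimately have "e = (if c u then {v0, vs!u} else {vs!u, vs!(pv k u)})"
          using r unfolding u_def by (simp add: insert_commute)
        then show ?thesis unfolding Tof_def using u by blast
      qed
    next
      fix e assume "e \<in> Tof v0 vs (pv k) c"
      then obtain t where t: "t < k" "e = (if c t then {v0, vs!t} else {vs!t, vs!(pv k t)})"
        unfolding Tof_def by blast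
      show "e \<in> T"
      proof (cases "c t")
        case True then show ?thesis using t unfolding c_def by simp
      next
        case False
        define s where "s = pv k t"
        have s: "s < k" unfolding s_def using pv_lt t(1) .
        have st: "(s+1) mod k = t" using nx_pv[OF t(1)] unfolding s_def nx_def .
        have "\<not> ({v0, vs!((s+1) mod k)} \<in> T)" using False unfolding st c_def .
        then have "{vs!s, vs!((s+1) mod k)} \<in> T" using B s by blast
        then have "{vs!t, vs!s} \<in> T" unfolding st by (simp add: insert_commute)
        then show ?thesis using t False unfolding s_def by simp
      qed
    qed
    then show ?thesis using wsig_pv by blast
  qed
  then obtain \<sigma> where ws: "wsig v0 vs \<sigma>" and Teq: "T = Tof v0 vs \<sigma> c" by blast
  interpret wsig v0 vs \<sigma> by (rule ws)
  have c1: "\<exists>j<k. c j" using Tof_spoke sT Teq by simp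
  have "W - T = Tof v0 vs \<sigma> (\<lambda>j. \<not> c j)" using Tof_compl Teq by simp
  then have c2: "\<exists>j<k. \<not> c j" using Tof_spoke[of "\<lambda>j. \<not> c j"] sC by simp
  show ?thesis using ws Teq c1 c2 by blast
qed

end

lemma wh_of: "is_wheel n v0 vs \<Longrightarrow> wh v0 vs"
  unfolding is_wheel_def wh_def by simp

lemma LT_spec:
  assumes "is_wheel n v0 vs"
  shows "coupled_tree v0 vs (leading_tree v0 vs) \<and>
    (\<forall>T'. coupled_tree v0 vs T' \<and> T' \<noteq> leading_tree v0 vs \<longrightarrow> set_gt (leading_tree v0 vs) T')"
proof -
  interpret wh v0 vs by (rule wh_of[OF assms])
  let ?TT = "{T. coupled_tree v0 vs T}"
  have sub: "?TT \<subseteq> Pow W" unfolding coupled_tree_def by auto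
  have fin: "finite ?TT" using finite_subset[OF sub] finite_W by blast
  have ne: "?TT \<noteq> {}"
  proof -
    interpret wsig v0 vs "nx k" by (rule wsig_nx)
    have "coupled_tree v0 vs (Tof v0 vs (nx k) (\<lambda>j. j = 0))"
    proof (rule Tof_coupled)
      show "\<exists>j<k. j = 0" using len by auto
      have "1 < k" using len by auto
      then show "\<exists>j<k. \<not> j = 0" by blast
    qed
    then show ?thesis by blast
  qed
  have el: "\<forall>T\<in>?TT. finite T \<and> (\<forall>e\<in>T. card e = 2)"
    using sub finite_W W_card2 finite_subset by blast
  obtain M where M: "M \<in> ?TT" "\<forall>T\<in>?TT. T \<noteq> M \<longrightarrow> set_gt M T"
    using set_gt_max[OF fin ne el] by blast
  let ?P = "\<lambda>T. coupled_tree v0 vs T \<and> (\<forall>T'. coupled_tree v0 vs T' \<and> T' \<noteq> T \<longrightarrow> set_gt T T')"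
  have PM: "?P M" using M by blast
  have uniq: "T = M" if "?P T" for T
  proof (rule ccontr)
    assume "T \<noteq> M"
    then have "set_gt T M" "set_gt M T" using that PM by blast+
    then show False using set_gt_asym by blast
  qed
  have "leading_tree v0 vs = M"
    unfolding leading_tree_def by (rule the_equality) (use PM uniq in blast)+
  then show ?thesis using PM by simp
qed


context wsig begin

lemma card_sig: "card {j. j < k \<and> P (\<sigma> j)} = card {i. i < k \<and> P i}"
proof -
  have eq: "\<sigma> ` {j. j < k \<and> P (\<sigma> j)} = {i. i < k \<and> P i}"
  proof (rule equalityI; rule subsetI)
    fix x assume "x \<in> \<sigma> ` {j. j < k \<and> P (\<sigma> j)}"
    then obtain j where j: "j < k" "P (\<sigma> j)" "x = \<sigma> j" by blast
    have "\<sigma> j < k" using sig_lt j(1) .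
    then show "x \<in> {i. i < k \<and> P i}" using j by blast
  next
    fix x assume x: "x \<in> {i. i < k \<and> P i}"
    then have "x \<in> \<sigma> ` {..<k}" using sig_surj by simp
    then obtain p where "p < k" "\<sigma> p = x" by blast
    then show "x \<in> \<sigma> ` {j. j < k \<and> P (\<sigma> j)}" using x by blast
  qed
  have inj: "inj_on \<sigma> {j. j < k \<and> P (\<sigma> j)}"
    by (rule inj_on_subset[OF sig_inj]) blast
  have "card (\<sigma> ` {j. j < k \<and> P (\<sigma> j)}) = card {j. j < k \<and> P (\<sigma> j)}" by (rule card_image[OF inj])
  then show ?thesis unfolding eq by simp
qed

end

context wh begin

lemma LT_spec_wh:
  assumes "wh v0 vs"
  shows "coupled_tree v0 vs (leading_tree v0 vs) \<and>
    (\<forall>T'. coupled_tree v0 vs T' \<and> T' \<noteq> leading_tree v0 vs \<longrightarrow> set_gt (leading_tree v0 vs) T')"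
proof -
  interpret wh v0 vs by (rule assms)
  let ?TT = "{T. coupled_tree v0 vs T}"
  have sub: "?TT \<subseteq> Pow W" unfolding coupled_tree_def by auto
  have fin: "finite ?TT" using finite_subset[OF sub] finite_W by blast
  have ne: "?TT \<noteq> {}"
  proof -
    interpret wsig v0 vs "nx k" by (rule wsig_nx)
    have "coupled_tree v0 vs (Tof v0 vs (nx k) (\<lambda>j. j = 0))"
    proof (rule Tof_coupled)
      show "\<exists>j<k. j = 0" using len by auto
      have "1 < k" using len by auto
      then show "\<exists>j<k. \<not> j = 0" by blast
    qed
    then show ?thesis by blast
  qed
  have el: "\<forall>T\<in>?TT. finite T \<and> (\<forall>e\<in>T. card e = 2)"
    using sub finite_W W_card2 finite_subset by blast
  obtain M where M: "M \<in> ?TT" "\<forall>T\<in>?TT. T \<noteq> M \<longrightarrow> set_gt M T"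
    using set_gt_max[OF fin ne el] by blast
  let ?P = "\<lambda>T. coupled_tree v0 vs T \<and> (\<forall>T'. coupled_tree v0 vs T' \<and> T' \<noteq> T \<longrightarrow> set_gt T T')"
  have PM: "?P M" using M by blast
  have uniq: "T = M" if "?P T" for T
  proof (rule ccontr)
    assume "T \<noteq> M"
    then have "set_gt T M" "set_gt M T" using that PM by blast+
    then show False using set_gt_asym by blast
  qed
  have "leading_tree v0 vs = M"
    unfolding leading_tree_def by (rule the_equality) (use PM uniq in blast)+
  then show ?thesis using PM by simp
qed


lemma cardV: "card {v \<in> V. v0 \<le> v} = Suc (card {i. i < k \<and> v0 < vs!i})"
proof -
  have eq: "{v \<in> V. v0 \<le> v} = insert v0 ((\<lambda>i. vs!i) ` {i. i < k \<and> v0 < vs!i})"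
  proof (rule equalityI; rule subsetI)
    fix v assume "v \<in> {v \<in> V. v0 \<le> v}"
    then have v: "v \<in> V" "v0 \<le> v" by auto
    show "v \<in> insert v0 ((\<lambda>i. vs!i) ` {i. i < k \<and> v0 < vs!i})"
    proof (cases "v = v0")
      case True then show ?thesis by blast
    next
      case False
      then obtain i where i: "i < k" "v = vs!i" using v(1) unfolding V_eq by blast
      then have "v0 < vs!i" using v(2) False by simp
      then show ?thesis using i by blast
    qed
  next
    fix v assume "v \<in> insert v0 ((\<lambda>i. vs!i) ` {i. i < k \<and> v0 < vs!i})"
    then show "v \<in> {v \<in> V. v0 \<le> v}" unfolding V_eq by auto
  qed
  have nin: "v0 \<notin> (\<lambda>i. vs!i) ` {i. i < k \<and> v0 < vs!i}" by blast
  have inj: "inj_on (\<lambda>i. vs!i) {i. i < k \<and> v0 < vs!i}"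
    by (rule inj_onI) (use x_inj in blast)
  have "card (insert v0 ((\<lambda>i. vs!i) ` {i. i < k \<and> v0 < vs!i})) = Suc (card ((\<lambda>i. vs!i) ` {i. i < k \<and> v0 < vs!i}))"
    using nin by (simp add: card_insert_disjoint)
  also have "\<dots> = Suc (card {i. i < k \<and> v0 < vs!i})" using card_image[OF inj] by simp
  finally show ?thesis unfolding eq .
qed

lemma main_wh:
  shows "(v0 = Min V \<longrightarrow> val (leading_tree v0 vs) v0 = k - 1)
       \<and> (v0 = Max V \<longrightarrow> val (leading_tree v0 vs) v0 = 1)
       \<and> (v0 \<noteq> Min V \<and> v0 \<noteq> Max V \<longrightarrow>
            (\<forall>i < k. (vs ! i > v0 \<longrightarrow> val (leading_tree v0 vs) (vs ! i) = 1)
                   \<and> (vs ! i < v0 \<longrightarrow> val (leading_tree v0 vs) (vs ! i) = 2))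
          \<and> (\<forall>r. r = card {v \<in> V. v0 \<le> v} \<longrightarrow> 2 \<le> r \<and> r \<le> k \<and> val (leading_tree v0 vs) v0 = r - 1))"
proof -
  define LT where "LT = leading_tree v0 vs"
  have spec: "coupled_tree v0 vs LT \<and> (\<forall>T'. coupled_tree v0 vs T' \<and> T' \<noteq> LT \<longrightarrow> set_gt LT T')"
    unfolding LT_def by (rule LT_spec_wh[OF wh_axioms])
  then have cpLT: "coupled_tree v0 vs LT" by (rule conjunct1)
  from nec_Tof[OF cpLT] obtain \<sigma> c where ws: "wsig v0 vs \<sigma>" and LTeq: "LT = Tof v0 vs \<sigma> c"
    and c1: "\<exists>j<k. c j" and c2: "\<exists>j<k. \<not> c j"
    by blast
  interpret wsig v0 vs \<sigma> by (rule ws)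
  have max: "\<forall>T'. coupled_tree v0 vs T' \<and> T' \<noteq> Tof v0 vs \<sigma> c \<longrightarrow> set_gt (Tof v0 vs \<sigma> c) T'"
    using spec unfolding LTeq by blast
  have finV: "finite V" unfolding V_eq by simp
  have neV: "V \<noteq> {}" unfolding V_eq by simp
  have xV: "vs!j \<in> V" if "j < k" for j using that unfolding V_eq by simp
  have v0V: "v0 \<in> V" unfolding V_eq by simp
  have valv0: "val LT v0 = card {j. j < k \<and> c j}" unfolding LTeq by (rule val_v0)
  have P1: "v0 = Min V \<longrightarrow> val LT v0 = k - 1"
  proof
    assume m: "v0 = Min V"
    have "\<forall>j<k. v0 < vs!j"
    proof (intro allI impI)
      fix j assume j: "j < k"
      have "Min V \<le> vs!j" using Min_le[OF finV xV[OF j]] .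
      moreover have "vs!j \<noteq> v0" using x_ne[OF j] .
      ultimately show "v0 < vs!j" using m by linarith
    qed
    then have "card {j. j < k \<and> c j} = k - 1" using caseI[OF max c2] by blast
    then show "val LT v0 = k - 1" using valv0 by linarith
  qed
  have P2: "v0 = Max V \<longrightarrow> val LT v0 = 1"
  proof
    assume m: "v0 = Max V"
    have "\<forall>j<k. vs!j < v0"
    proof (intro allI impI)
      fix j assume j: "j < k"
      have "vs!j \<le> Max V" using Max_ge[OF finV xV[OF j]] .
      moreover have "vs!j \<noteq> v0" using x_ne[OF j] .
      ultimately show "vs!j < v0" using m by linarith
    qed
    then have "card {j. j < k \<and> c j} = 1" using caseII[OF max c1] by blast
    then show "val LT v0 = 1" using valv0 by linarith
  qed
  have P3: "v0 \<noteq> Min V \<and> v0 \<noteq> Max V \<longrightarrow>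
            (\<forall>i < k. (vs ! i > v0 \<longrightarrow> val LT (vs ! i) = 1)
                   \<and> (vs ! i < v0 \<longrightarrow> val LT (vs ! i) = 2))
          \<and> (\<forall>r. r = card {v \<in> V. v0 \<le> v} \<longrightarrow> 2 \<le> r \<and> r \<le> k \<and> val LT v0 = r - 1)"
  proof
    assume mm: "v0 \<noteq> Min V \<and> v0 \<noteq> Max V"
    define mn where "mn = Min V"
    have "mn \<in> V" unfolding mn_def using Min_in[OF finV neV] .
    then have "mn \<in> V - {v0}" by (rule DiffI) (use mm in \<open>simp add: mn_def\<close>)
    then have "mn \<in> (\<lambda>i. vs!i) ` {..<k}" unfolding V_minus .
    then obtain jl where jl: "jl < k" "vs!jl = Min V" unfolding mn_def by (metis imageE lessThan_iff)
    have "Min V \<le> v0" using Min_le[OF finV v0V] .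
    then have lo: "vs!jl < v0" using jl mm by linarith
    define mx where "mx = Max V"
    have "mx \<in> V" unfolding mx_def using Max_in[OF finV neV] .
    then have "mx \<in> V - {v0}" by (rule DiffI) (use mm in \<open>simp add: mx_def\<close>)
    then have "mx \<in> (\<lambda>i. vs!i) ` {..<k}" unfolding V_minus .
    then obtain jh where jh: "jh < k" "vs!jh = Max V" unfolding mx_def by (metis imageE lessThan_iff)
    have "v0 \<le> Max V" using Max_ge[OF finV v0V] .
    then have hi: "v0 < vs!jh" using jh mm by linarith
    have lo': "\<exists>j<k. vs!j < v0" using jl lo by blast
    have hi': "\<exists>j<k. v0 < vs!j" using jh hi by blast
    have cIII: "\<forall>j<k. c j = (v0 < vs!(\<sigma> j))" by (rule caseIII[OF max lo' hi'])
    have vx: "\<forall>i < k. (vs ! i > v0 \<longrightarrow> val LT (vs ! i) = 1) \<and> (vs ! i < v0 \<longrightarrow> val LT (vs ! i) = 2)"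
    proof (intro allI impI conjI)
      fix i assume i: "i < k"
      then have "i \<in> \<sigma> ` {..<k}" using sig_surj by simp
      then obtain p where p: "p < k" "\<sigma> p = i" by blast
      have vv0: "val LT (vs!i) = (if c p then 1 else 2)" unfolding LTeq by (rule val_x[OF i p])
      have "c p = (v0 < vs!i)" using cIII p by blast
      then have vv: "val LT (vs!i) = (if v0 < vs!i then 1 else 2)" using vv0 by simp
      show "vs ! i > v0 \<Longrightarrow> val LT (vs ! i) = 1" using vv by simp
      show "vs ! i < v0 \<Longrightarrow> val LT (vs ! i) = 2" using vv by simp
    qed
    define N where "N = card {i. i < k \<and> v0 < vs!i}"
    have "{j. j < k \<and> c j} = {j. j < k \<and> v0 < vs!(\<sigma> j)}"
    proof (rule Collect_cong)
      fix j show "(j < k \<and> c j) = (j < k \<and> v0 < vs!(\<sigma> j))" using cIII by blast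
    qed
    then have cardc: "card {j. j < k \<and> c j} = N" unfolding N_def using card_sig[of "\<lambda>v. v0 < vs!v"] by simp
    have cV: "card {v \<in> V. v0 \<le> v} = Suc N" unfolding N_def by (rule cardV)
    have N1: "1 \<le> N"
    proof -
      have "{jh} \<subseteq> {i. i < k \<and> v0 < vs!i}" using jh hi by blast
      moreover have "finite {i. i < k \<and> v0 < vs!i}" by simp
      ultimately have "card {jh} \<le> N" unfolding N_def by (rule card_mono[rotated])
      then show ?thesis by simp
    qed
    have Nk: "N < k"
    proof -
      have sub: "{i. i < k \<and> v0 < vs!i} \<subseteq> {..<k}" by blast
      have n1: "jl \<notin> {i. i < k \<and> v0 < vs!i}" using lo by simp
      have n2: "jl \<in> {..<k}" using jl(1) by simp
      have "{i. i < k \<and> v0 < vs!i} \<subset> {..<k}" unfolding psubset_eq using sub n1 n2 by blast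
      then have "card {i. i < k \<and> v0 < vs!i} < card {..<k}" by (rule psubset_card_mono[rotated]) simp
      then show ?thesis unfolding N_def by simp
    qed
    have "\<forall>r. r = card {v \<in> V. v0 \<le> v} \<longrightarrow> 2 \<le> r \<and> r \<le> k \<and> val LT v0 = r - 1"
    proof (intro allI impI)
      fix r assume "r = card {v \<in> V. v0 \<le> v}"
      then have r: "r = Suc N" using cV by simp
      have "val LT v0 = N" using valv0 cardc by simp
      then show "2 \<le> r \<and> r \<le> k \<and> val LT v0 = r - 1" using r N1 Nk by simp
    qed
    then show "(\<forall>i < k. (vs ! i > v0 \<longrightarrow> val LT (vs ! i) = 1) \<and> (vs ! i < v0 \<longrightarrow> val LT (vs ! i) = 2))
          \<and> (\<forall>r. r = card {v \<in> V. v0 \<le> v} \<longrightarrow> 2 \<le> r \<and> r \<le> k \<and> val LT v0 = r - 1)"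
      using vx by blast
  qed
  show ?thesis using P1 P2 P3 unfolding LT_def by blast
qed

end

theorem proposition4p1:
  fixes n v0 :: nat and vs :: "nat list"
  assumes "is_wheel n v0 vs"
  defines "V \<equiv> wheel_vertices v0 vs"
  defines "k \<equiv> length vs"
  defines "LT \<equiv> leading_tree v0 vs"
  shows "(v0 = Min V \<longrightarrow> val LT v0 = k - 1)
       \<and> (v0 = Max V \<longrightarrow> val LT v0 = 1)
       \<and> (v0 \<noteq> Min V \<and> v0 \<noteq> Max V \<longrightarrow>
            (\<forall>i < k. (vs ! i > v0 \<longrightarrow> val LT (vs ! i) = 1)
                   \<and> (vs ! i < v0 \<longrightarrow> val LT (vs ! i) = 2))
          \<and> (\<forall>r. r = card {v \<in> V. v0 \<le> v} \<longrightarrow> 2 \<le> r \<and> r \<le> k \<and> val LT v0 = r - 1))"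
  unfolding V_def k_def LT_def by (rule wh.main_wh[OF wh_of[OF assms(1)]])


end
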